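(* Let $(X,d)$ be any metric space, $x_0\in X$, $n\geq 1$. Equipped with the topology induced by the pseudometric $\rho$, $\pi_n(X,x_0)$ is a topological group, and for every $r>0$ the open ball $B_\rho(e,r)=\{a\in\pi_n(X,x_0)\mid\rho(e,a)<r\}$ is an open normal subgroup.
   Context: $\Omega^n(X,x_0)$ is the set of continuous maps $\alpha:[0,1]^n\to X$ with $\alpha(\partial[0,1]^n)=\{x_0\}$, with uniform metric $\mu(\alpha,\beta)=\sup_{t\in[0,1]^n}d(\alpha(t),\beta(t))$. For $a,b\in\pi_n(X,x_0)$, $\rho(a,b)=\inf\{\mu(\alpha,\beta)\mid\alpha\in a,\beta\in b\}$, which is a pseudometric; $e$ denotes the identity element. *)

theory Defs
  imports "HOL-Analysis.Analysis" "HOL-Algebra.Coset"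
begin

text \<open>The n-cube [0,1]^n, realised inside nat => real (product topology):
  coordinates 0..n-1 range over [0,1], all other coordinates are 0.\<close>
definition cube :: "nat \<Rightarrow> (nat \<Rightarrow> real) set" where
  "cube n = {t. (\<forall>i<n. 0 \<le> t i \<and> t i \<le> 1) \<and> (\<forall>i\<ge>n. t i = 0)}"

definition cube_boundary :: "nat \<Rightarrow> (nat \<Rightarrow> real) set" where
  "cube_boundary n = {t \<in> cube n. \<exists>i<n. t i = 0 \<or> t i = 1}"

text \<open>Omega^n(X,x0): continuous maps of the cube into X sending the boundary to x0
  (only the restriction to the cube is relevant).\<close>
definition Omega :: "nat \<Rightarrow> 'a::topological_space set \<Rightarrow> 'a \<Rightarrow> ((nat \<Rightarrow> real) \<Rightarrow> 'a) set" where
  "Omega n X x0 = {\<alpha>. continuous_on (cube n) \<alpha> \<and> \<alpha> ` cube n \<subseteq> X \<and>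
                       (\<forall>t\<in>cube_boundary n. \<alpha> t = x0)}"

definition rel_homotopic :: "nat \<Rightarrow> 'a::topological_space set \<Rightarrow> 'a
    \<Rightarrow> ((nat \<Rightarrow> real) \<Rightarrow> 'a) \<Rightarrow> ((nat \<Rightarrow> real) \<Rightarrow> 'a) \<Rightarrow> bool" where
  "rel_homotopic n X x0 \<alpha> \<beta> \<longleftrightarrow>
     homotopic_with (\<lambda>f. \<forall>t\<in>cube_boundary n. f t = x0)
       (top_of_set (cube n)) (top_of_set X) \<alpha> \<beta>"

definition homotopy_rel :: "nat \<Rightarrow> 'a::topological_space set \<Rightarrow> 'a
    \<Rightarrow> (((nat \<Rightarrow> real) \<Rightarrow> 'a) \<times> ((nat \<Rightarrow> real) \<Rightarrow> 'a)) set" where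
  "homotopy_rel n X x0 = {(\<alpha>, \<beta>). \<alpha> \<in> Omega n X x0 \<and> \<beta> \<in> Omega n X x0 \<and> rel_homotopic n X x0 \<alpha> \<beta>}"

definition concat_cube :: "((nat \<Rightarrow> real) \<Rightarrow> 'a) \<Rightarrow> ((nat \<Rightarrow> real) \<Rightarrow> 'a) \<Rightarrow> (nat \<Rightarrow> real) \<Rightarrow> 'a" where
  "concat_cube \<alpha> \<beta> t = (if t 0 \<le> 1/2 then \<alpha> (t(0 := 2 * t 0)) else \<beta> (t(0 := 2 * t 0 - 1)))"

definition pi_group :: "nat \<Rightarrow> 'a::topological_space set \<Rightarrow> 'a
    \<Rightarrow> (((nat \<Rightarrow> real) \<Rightarrow> 'a) set) monoid" where
  "pi_group n X x0 =
    \<lparr>carrier = Omega n X x0 // homotopy_rel n X x0,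
     mult = (\<lambda>A B. homotopy_rel n X x0 `` {concat_cube (SOME \<alpha>. \<alpha> \<in> A) (SOME \<beta>. \<beta> \<in> B)}),
     one = homotopy_rel n X x0 `` {\<lambda>t. x0}\<rparr>"

definition mu :: "nat \<Rightarrow> ((nat \<Rightarrow> real) \<Rightarrow> 'a::metric_space) \<Rightarrow> ((nat \<Rightarrow> real) \<Rightarrow> 'a) \<Rightarrow> real" where
  "mu n \<alpha> \<beta> = (SUP t\<in>cube n. dist (\<alpha> t) (\<beta> t))"

definition rho :: "nat \<Rightarrow> ((nat \<Rightarrow> real) \<Rightarrow> 'a::metric_space) set
    \<Rightarrow> ((nat \<Rightarrow> real) \<Rightarrow> 'a) set \<Rightarrow> real" where
  "rho n a b = Inf {mu n \<alpha> \<beta> | \<alpha> \<beta>. \<alpha> \<in> a \<and> \<beta> \<in> b}"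

definition pseudometric_topology :: "'b set \<Rightarrow> ('b \<Rightarrow> 'b \<Rightarrow> real) \<Rightarrow> 'b topology" where
  "pseudometric_topology S d =
     topology (\<lambda>U. U \<subseteq> S \<and> (\<forall>a\<in>U. \<exists>r>0. {b \<in> S. d a b < r} \<subseteq> U))"

definition pi_topology :: "nat \<Rightarrow> 'a::metric_space set \<Rightarrow> 'a
    \<Rightarrow> ((nat \<Rightarrow> real) \<Rightarrow> 'a) set topology" where
  "pi_topology n X x0 = pseudometric_topology (carrier (pi_group n X x0)) (rho n)"

definition topological_group :: "('b, 'c) monoid_scheme \<Rightarrow> 'b topology \<Rightarrow> bool" where
  "topological_group G T \<longleftrightarrow>
     group G \<and> topspace T = carrier G \<and>
     continuous_map (prod_topology T T) T (\<lambda>(a, b). a \<otimes>\<^bsub>G\<^esub> b) \<and>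
     continuous_map T T (\<lambda>a. inv\<^bsub>G\<^esub> a)"

end

theory Submission
  imports Defs
begin

lemma openin_pm:
  "openin (pseudometric_topology S d) U \<longleftrightarrow> U \<subseteq> S \<and> (\<forall>a\<in>U. \<exists>r>0. {b \<in> S. d a b < r} \<subseteq> U)"
proof -
  have "istopology (\<lambda>U. U \<subseteq> S \<and> (\<forall>a\<in>U. \<exists>r>0. {b \<in> S. d a b < r} \<subseteq> U))"
    unfolding istopology_def
  proof (rule conjI; intro allI impI)
    fix U V assume U: "U \<subseteq> S \<and> (\<forall>a\<in>U. \<exists>r>0. {b \<in> S. d a b < r} \<subseteq> U)"
      and V: "V \<subseteq> S \<and> (\<forall>a\<in>V. \<exists>r>0. {b \<in> S. d a b < r} \<subseteq> V)"
    show "U \<inter> V \<subseteq> S \<and> (\<forall>a\<in>U \<inter> V. \<exists>r>0. {b \<in> S. d a b < r} \<subseteq> U \<inter> V)"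
    proof (intro conjI ballI)
      show "U \<inter> V \<subseteq> S" using U by blast
      fix a assume a: "a \<in> U \<inter> V"
      then obtain r1 r2 where r: "r1 > 0" "{b \<in> S. d a b < r1} \<subseteq> U" "r2 > 0" "{b \<in> S. d a b < r2} \<subseteq> V"
        using U V by blast
      then have "{b \<in> S. d a b < min r1 r2} \<subseteq> U \<inter> V" by auto
      then show "\<exists>r>0. {b \<in> S. d a b < r} \<subseteq> U \<inter> V" using r by (intro exI[of _ "min r1 r2"]) auto
    qed
  next
    fix K assume K: "\<forall>U\<in>K. U \<subseteq> S \<and> (\<forall>a\<in>U. \<exists>r>0. {b \<in> S. d a b < r} \<subseteq> U)"
    show "\<Union>K \<subseteq> S \<and> (\<forall>a\<in>\<Union>K. \<exists>r>0. {b \<in> S. d a b < r} \<subseteq> \<Union>K)"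
    proof (intro conjI ballI)
      show "\<Union>K \<subseteq> S" using K by blast
      fix a assume "a \<in> \<Union>K"
      then obtain U where "U \<in> K" "a \<in> U" by blast
      then obtain r where "r > 0" "{b \<in> S. d a b < r} \<subseteq> U" using K by blast
      then show "\<exists>r>0. {b \<in> S. d a b < r} \<subseteq> \<Union>K" using \<open>U \<in> K\<close> by blast
    qed
  qed
  then show ?thesis unfolding pseudometric_topology_def by simp
qed

lemma topspace_pm: "topspace (pseudometric_topology S d) = S"
proof -
  have "openin (pseudometric_topology S d) S" unfolding openin_pm by (auto intro: exI[of _ 1])
  moreover have "openin (pseudometric_topology S d) U \<Longrightarrow> U \<subseteq> S" for U unfolding openin_pm by blast
  ultimately show ?thesis unfolding topspace_def by blast
qed

definition rvc :: "((nat \<Rightarrow> real) \<Rightarrow> 'a) \<Rightarrow> (nat \<Rightarrow> real) \<Rightarrow> 'a" where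
  "rvc \<alpha> = (\<lambda>t. \<alpha> (t(0 := 1 - t 0)))"

locale pig =
  fixes X :: "'a::metric_space set" and x0 :: 'a and n :: nat
  assumes x0X: "x0 \<in> X" and n1: "1 \<le> n"
begin

abbreviation "C \<equiv> cube n"
abbreviation "B \<equiv> cube_boundary n"
abbreviation "\<Omega> \<equiv> Omega n X x0"
abbreviation "R \<equiv> homotopy_rel n X x0"

lemma cube_upd: "t \<in> C \<Longrightarrow> 0 \<le> s \<Longrightarrow> s \<le> 1 \<Longrightarrow> t(0:=s) \<in> C"
  using n1 by (auto simp: cube_def)

lemma bd_upd01: "t \<in> C \<Longrightarrow> s = 0 \<or> s = 1 \<Longrightarrow> t(0:=s) \<in> B"
  using n1 cube_upd[of t s] by (auto simp: cube_boundary_def)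

lemma bd_upd: "t \<in> B \<Longrightarrow> t 0 = 0 \<or> t 0 = 1 \<or> (\<forall>s. 0 \<le> s \<and> s \<le> 1 \<longrightarrow> t(0:=s) \<in> B)"
  unfolding cube_boundary_def
  by (smt (verit, best) cube_upd fun_upd_other mem_Collect_eq)

lemma B_C: "B \<subseteq> C" by (auto simp: cube_boundary_def)

lemma C_ne: "C \<noteq> {}"
proof -
  have "(\<lambda>i. 0) \<in> C" by (auto simp: cube_def)
  thus ?thesis by blast
qed

lemma hom_intro:
  fixes h :: "real \<times> (nat \<Rightarrow> real) \<Rightarrow> 'a"
  assumes "continuous_on ({0..1} \<times> C) h" "h ` ({0..1} \<times> C) \<subseteq> X"
    "\<And>u t. 0 \<le> u \<Longrightarrow> u \<le> 1 \<Longrightarrow> t \<in> B \<Longrightarrow> h (u,t) = x0"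
  shows "rel_homotopic n X x0 (\<lambda>t. h(0,t)) (\<lambda>t. h(1,t))"
  unfolding rel_homotopic_def homotopic_with_def
  apply (rule exI[of _ h])
  using assms by (auto simp: continuous_map_subtopology_eu)

lemma rel_eq:
  assumes "rel_homotopic n X x0 f g" "\<And>t. t \<in> C \<Longrightarrow> f' t = f t" "\<And>t. t \<in> C \<Longrightarrow> g' t = g t"
  shows "rel_homotopic n X x0 f' g'"
  using assms unfolding rel_homotopic_def
  apply (rule homotopic_with_eq)
  using B_C by auto (metis subsetD)+

lemma Omega_eq: "f \<in> \<Omega> \<Longrightarrow> (\<And>t. t \<in> C \<Longrightarrow> g t = f t) \<Longrightarrow> g \<in> \<Omega>"
  unfolding Omega_def using B_C
  by (auto simp: subset_eq cong: continuous_on_cong)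

lemma equivR: "equiv \<Omega> R"
proof (rule equivI)
  show "refl_on \<Omega> R"
    unfolding refl_on_def homotopy_rel_def rel_homotopic_def Omega_def
    by (auto simp: continuous_map_subtopology_eu)
  show "sym R"
    unfolding sym_def homotopy_rel_def rel_homotopic_def
    by (auto intro: homotopic_with_symD)
  show "trans R"
    unfolding trans_def homotopy_rel_def rel_homotopic_def
    by (auto intro: homotopic_with_trans)
qed (auto simp: homotopy_rel_def)

lemma rel_Omega: "rel_homotopic n X x0 f g \<Longrightarrow> f \<in> \<Omega> \<and> g \<in> \<Omega>"
proof -
  assume "rel_homotopic n X x0 f g"
  then have h: "homotopic_with (\<lambda>f. \<forall>t\<in>B. f t = x0) (top_of_set C) (top_of_set X) f g"
    by (simp add: rel_homotopic_def)
  from homotopic_with_imp_continuous_maps[OF h] homotopic_with_imp_property[OF h]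
  have "(continuous_on C f \<and> f ` C \<subseteq> X \<and> (\<forall>t\<in>B. f t = x0)) \<and>
    (continuous_on C g \<and> g ` C \<subseteq> X \<and> (\<forall>t\<in>B. g t = x0))"
    unfolding continuous_map_subtopology_eu by (simp add: Pi_iff image_subset_iff)
  then show ?thesis by (simp add: Omega_def)
qed

lemma reparam:
  fixes \<Phi> :: "real \<times> real \<Rightarrow> real"
  assumes a: "\<alpha> \<in> \<Omega>" and cP: "continuous_on ({0..1}\<times>{0..1}) \<Phi>"
    and P01: "\<And>u s. 0 \<le> u \<Longrightarrow> u \<le> 1 \<Longrightarrow> 0 \<le> s \<Longrightarrow> s \<le> 1 \<Longrightarrow> 0 \<le> \<Phi>(u,s) \<and> \<Phi>(u,s) \<le> 1"
    and Pb: "\<And>u. 0 \<le> u \<Longrightarrow> u \<le> 1 \<Longrightarrow> (\<Phi>(u,0) = 0 \<or> \<Phi>(u,0) = 1) \<and> (\<Phi>(u,1) = 0 \<or> \<Phi>(u,1) = 1)"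
  shows "rel_homotopic n X x0 (\<lambda>t. \<alpha>(t(0:=\<Phi>(0,t 0)))) (\<lambda>t. \<alpha>(t(0:=\<Phi>(1,t 0))))"
proof -
  let ?g = "\<lambda>p::real \<times> (nat \<Rightarrow> real). (snd p)(0 := \<Phi>(fst p, snd p 0))"
  have t0: "t \<in> C \<Longrightarrow> 0 \<le> t 0 \<and> t 0 \<le> 1" for t using n1 by (auto simp: cube_def)
  have img: "?g ` ({0..1} \<times> C) \<subseteq> C"
    using t0 P01 cube_upd by auto
  have c1: "continuous_on ({0..1} \<times> C) (\<lambda>p::real \<times> (nat \<Rightarrow> real). snd p i)" for i
  proof -
    have "continuous_on UNIV (\<lambda>x::nat\<Rightarrow>real. x i)" by simp
    then have "continuous_on (snd ` ({0..1} \<times> C)) (\<lambda>x::nat\<Rightarrow>real. x i)"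
      by (rule continuous_on_subset) simp
    from continuous_on_compose[OF continuous_on_snd[OF continuous_on_id] this]
    show ?thesis by (simp add: o_def)
  qed
  have c2: "continuous_on ({0..1} \<times> C) (\<lambda>p::real \<times> (nat \<Rightarrow> real). \<Phi>(fst p, snd p 0))"
    apply (rule continuous_on_compose2[OF cP])
     apply (intro continuous_intros c1)
    using t0 by auto
  have cg: "continuous_on ({0..1} \<times> C) ?g"
    apply (rule continuous_on_coordinatewise_then_product)
    subgoal for i by (cases "i = 0") (simp_all add: c1 c2)
    done
  have ca: "continuous_on C \<alpha>" using a by (simp add: Omega_def)
  define h where "h = (\<lambda>p::real \<times> (nat \<Rightarrow> real). \<alpha>((snd p)(0:=\<Phi>(fst p,snd p 0))))"
  have "rel_homotopic n X x0 (\<lambda>t. h (0,t)) (\<lambda>t. h (1,t))"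
  proof (rule hom_intro)
    show "continuous_on ({0..1} \<times> C) h"
      using continuous_on_compose2[OF ca cg img] by (simp add: h_def)
    show "h ` ({0..1} \<times> C) \<subseteq> X"
      using img a unfolding h_def Omega_def by fastforce
    fix u :: real and t assume u: "0 \<le> u" "u \<le> 1" and tB: "t \<in> B"
    have tC: "t \<in> C" using tB B_C by auto
    have "t(0:=\<Phi>(u,t 0)) \<in> B"
      using bd_upd[OF tB] Pb[OF u] bd_upd01[OF tC] P01[OF u] t0[OF tC] by auto
    then show "h (u,t) = x0"
      using a by (simp add: Omega_def h_def)
  qed
  then show ?thesis by (simp add: h_def)
qed

lemma hom_elim:
  assumes "rel_homotopic n X x0 f g"
  obtains h :: "real \<times> (nat \<Rightarrow> real) \<Rightarrow> 'a" where "continuous_on ({0..1} \<times> C) h"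
    "h ` ({0..1} \<times> C) \<subseteq> X" "\<And>t. h(0,t) = f t" "\<And>t. h(1,t) = g t"
    "\<And>u t. 0 \<le> u \<Longrightarrow> u \<le> 1 \<Longrightarrow> t \<in> B \<Longrightarrow> h(u,t) = x0"
  using assms unfolding rel_homotopic_def homotopic_with_def
  by (auto simp: continuous_map_subtopology_eu Pi_iff image_subset_iff)

lemma snd_coord_cont: "continuous_on S (\<lambda>p::'b::topological_space \<times> (nat \<Rightarrow> real). snd p i)"
proof -
  have "continuous_on UNIV (\<lambda>x::nat\<Rightarrow>real. x i)" by simp
  then have "continuous_on (snd ` S) (\<lambda>x::nat\<Rightarrow>real. x i)"
    by (rule continuous_on_subset) simp
  from continuous_on_compose[OF continuous_on_snd[OF continuous_on_id] this]
  show ?thesis by (simp add: o_def)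
qed

lemma upd_cont:
  assumes "continuous_on S f"
  shows "continuous_on S (\<lambda>p::'b::topological_space \<times> (nat \<Rightarrow> real). (snd p)(0 := f p))"
  apply (rule continuous_on_coordinatewise_then_product)
  subgoal for i by (cases "i = 0") (simp_all add: assms snd_coord_cont)
  done

lemma concat_hom:
  fixes h k :: "real \<times> (nat \<Rightarrow> real) \<Rightarrow> 'a"
  assumes ch: "continuous_on ({0..1} \<times> C) h" and ih: "h ` ({0..1} \<times> C) \<subseteq> X"
    and bh: "\<And>u t. 0 \<le> u \<Longrightarrow> u \<le> 1 \<Longrightarrow> t \<in> B \<Longrightarrow> h(u,t) = x0"
    and ck: "continuous_on ({0..1} \<times> C) k" and ik: "k ` ({0..1} \<times> C) \<subseteq> X"
    and bk: "\<And>u t. 0 \<le> u \<Longrightarrow> u \<le> 1 \<Longrightarrow> t \<in> B \<Longrightarrow> k(u,t) = x0"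
  shows "rel_homotopic n X x0 (concat_cube (\<lambda>t. h(0,t)) (\<lambda>t. k(0,t)))
                              (concat_cube (\<lambda>t. h(1,t)) (\<lambda>t. k(1,t)))"
proof -
  define H where "H = (\<lambda>p::real \<times> (nat \<Rightarrow> real). if snd p 0 \<le> 1/2 then h (fst p, (snd p)(0 := 2 * snd p 0))
                   else k (fst p, (snd p)(0 := 2 * snd p 0 - 1)))"
  let ?S = "{0..1} \<times> C"
  have t0: "t \<in> C \<Longrightarrow> 0 \<le> t 0 \<and> t 0 \<le> 1" for t using n1 by (auto simp: cube_def)
  have "rel_homotopic n X x0 (\<lambda>t. H(0,t)) (\<lambda>t. H(1,t))"
  proof (rule hom_intro)
    show "continuous_on ?S H"
      unfolding H_def
    proof (rule continuous_on_cases_le)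
      show "continuous_on ?S (\<lambda>p. snd p 0)" by (rule snd_coord_cont)
      have c1: "continuous_on {p \<in> ?S. snd p 0 \<le> 1/2} (\<lambda>p::real \<times> (nat \<Rightarrow> real). (fst p, (snd p)(0 := 2 * snd p 0)))"
        by (intro continuous_intros upd_cont snd_coord_cont)
      show "continuous_on {p \<in> ?S. snd p 0 \<le> 1/2} (\<lambda>p. h (fst p, (snd p)(0 := 2 * snd p 0)))"
        apply (rule continuous_on_compose2[OF ch c1])
        using cube_upd t0 by auto
      have c2: "continuous_on {p \<in> ?S. 1/2 \<le> snd p 0} (\<lambda>p::real \<times> (nat \<Rightarrow> real). (fst p, (snd p)(0 := 2 * snd p 0 - 1)))"
        by (intro continuous_intros upd_cont snd_coord_cont)
      show "continuous_on {p \<in> ?S. 1/2 \<le> snd p 0} (\<lambda>p. k (fst p, (snd p)(0 := 2 * snd p 0 - 1)))"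
        apply (rule continuous_on_compose2[OF ck c2])
        using cube_upd t0 by auto
      fix p :: "real \<times> (nat \<Rightarrow> real)" assume p: "p \<in> ?S" "snd p 0 = 1/2"
      then have "(snd p)(0 := 1) \<in> B" "(snd p)(0 := 0) \<in> B" using bd_upd01 by auto
      moreover have e: "2 * snd p 0 = 1" "2 * snd p 0 - 1 = 0" using p by auto
      moreover have "0 \<le> fst p" "fst p \<le> 1" using p by (auto simp: mem_Times_iff)
      ultimately show "h (fst p, (snd p)(0 := 2 * snd p 0)) = k (fst p, (snd p)(0 := 2 * snd p 0 - 1))"
        using bh bk by (simp only: e)
    qed
    show "H ` ?S \<subseteq> X"
    proof
      fix y assume "y \<in> H ` ?S"
      then obtain u t where ut: "u \<in> {0..1}" "t \<in> C" "y = H (u,t)" by auto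
      show "y \<in> X"
      proof (cases "t 0 \<le> 1/2")
        case True
        then have "(u, t(0 := 2 * t 0)) \<in> ?S" using ut t0 cube_upd by auto
        then show ?thesis using ih True ut by (auto simp: H_def)
      next
        case False
        then have "(u, t(0 := 2 * t 0 - 1)) \<in> ?S" using ut t0 cube_upd by auto
        then show ?thesis using ik False ut by (auto simp: H_def)
      qed
    qed
    fix u :: real and t assume u: "0 \<le> u" "u \<le> 1" and tB: "t \<in> B"
    have tC: "t \<in> C" using tB B_C by auto
    show "H (u,t) = x0"
    proof (cases "t 0 \<le> 1/2")
      case True
      then have "t(0 := 2 * t 0) \<in> B" using bd_upd[OF tB] bd_upd01[OF tC] t0[OF tC] by auto
      then show ?thesis using bh u True by (auto simp: H_def)
    next
      case False
      then have "t(0 := 2 * t 0 - 1) \<in> B" using bd_upd[OF tB] bd_upd01[OF tC] t0[OF tC] by auto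
      then show ?thesis using bk u False by (auto simp: H_def)
    qed
  qed
  moreover have "(\<lambda>t. H(u,t)) = concat_cube (\<lambda>t. h(u,t)) (\<lambda>t. k(u,t))" for u
    by (simp add: fun_eq_iff H_def concat_cube_def)
  ultimately show ?thesis by simp
qed

lemma concat_rel:
  assumes "rel_homotopic n X x0 \<alpha> \<alpha>'" "rel_homotopic n X x0 \<beta> \<beta>'"
  shows "rel_homotopic n X x0 (concat_cube \<alpha> \<beta>) (concat_cube \<alpha>' \<beta>')"
  using assms(1)
proof (rule hom_elim)
  fix h :: "real \<times> (nat \<Rightarrow> real) \<Rightarrow> 'a"
  assume h: "continuous_on ({0..1} \<times> C) h"
    "h ` ({0..1} \<times> C) \<subseteq> X" "\<And>t. h(0,t) = \<alpha> t" "\<And>t. h(1,t) = \<alpha>' t"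
    "\<And>u t. 0 \<le> u \<Longrightarrow> u \<le> 1 \<Longrightarrow> t \<in> B \<Longrightarrow> h(u,t) = x0"
  show ?thesis
    using assms(2)
  proof (rule hom_elim)
    fix k :: "real \<times> (nat \<Rightarrow> real) \<Rightarrow> 'a"
    assume k: "continuous_on ({0..1} \<times> C) k"
      "k ` ({0..1} \<times> C) \<subseteq> X" "\<And>t. k(0,t) = \<beta> t" "\<And>t. k(1,t) = \<beta>' t"
      "\<And>u t. 0 \<le> u \<Longrightarrow> u \<le> 1 \<Longrightarrow> t \<in> B \<Longrightarrow> k(u,t) = x0"
    show ?thesis
      by (rule rel_eq[OF concat_hom[OF h(1,2,5) k(1,2,5)]]) (simp_all add: concat_cube_def h(3,4) k(3,4))
  qed
qed

lemma Omega_rel: "\<alpha> \<in> \<Omega> \<Longrightarrow> rel_homotopic n X x0 \<alpha> \<alpha>"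
proof -
  assume "\<alpha> \<in> \<Omega>"
  with equivR have "(\<alpha>, \<alpha>) \<in> R" by (simp add: equiv_def refl_on_def)
  then show ?thesis by (simp add: homotopy_rel_def)
qed

lemma concat_Omega: "\<alpha> \<in> \<Omega> \<Longrightarrow> \<beta> \<in> \<Omega> \<Longrightarrow> concat_cube \<alpha> \<beta> \<in> \<Omega>"
  using concat_rel[OF Omega_rel Omega_rel, of \<alpha> \<beta>] rel_Omega by simp

lemma rp1:
  assumes a: "\<alpha> \<in> \<Omega>" and c: "continuous_on {0..1} \<phi>"
    and r: "\<And>s. 0 \<le> s \<Longrightarrow> s \<le> 1 \<Longrightarrow> 0 \<le> \<phi> s \<and> \<phi> s \<le> 1"
    and e: "\<phi> 0 = 0" "\<phi> 1 = 1"
  shows "rel_homotopic n X x0 \<alpha> (\<lambda>t. \<alpha> (t(0 := \<phi> (t 0))))"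
proof -
  define \<Phi> where "\<Phi> = (\<lambda>p::real \<times> real. (1 - fst p) * snd p + fst p * \<phi> (snd p))"
  have "continuous_on ({0..1}\<times>{0..1}) (\<lambda>p::real \<times> real. \<phi> (snd p))"
    by (rule continuous_on_compose2[OF c]) (auto intro: continuous_intros)
  then have cP: "continuous_on ({0..1}\<times>{0..1}) \<Phi>"
    unfolding \<Phi>_def by (intro continuous_intros)
  have P01: "0 \<le> \<Phi>(u,s) \<and> \<Phi>(u,s) \<le> 1" if "0 \<le> u" "u \<le> 1" "0 \<le> s" "s \<le> 1" for u s
  proof -
    have "0 \<le> (1 - u) * s + u * \<phi> s"
      using that r[of s] by (simp add: add_nonneg_nonneg mult_nonneg_nonneg)
    moreover have "(1 - u) * s + u * \<phi> s \<le> (1 - u) * 1 + u * 1"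
      using that r[of s] by (intro add_mono mult_left_mono) auto
    ultimately show ?thesis by (simp add: \<Phi>_def)
  qed
  have "rel_homotopic n X x0 (\<lambda>t. \<alpha>(t(0:=\<Phi>(0,t 0)))) (\<lambda>t. \<alpha>(t(0:=\<Phi>(1,t 0))))"
    by (rule reparam[OF a cP P01]) (auto simp: \<Phi>_def e)
  then show ?thesis by (rule rel_eq) (simp_all add: \<Phi>_def)
qed

lemma rvc_Omega: "\<alpha> \<in> \<Omega> \<Longrightarrow> rvc \<alpha> \<in> \<Omega>"
proof -
  assume a: "\<alpha> \<in> \<Omega>"
  have "rel_homotopic n X x0 (\<lambda>t. \<alpha>(t(0:=(\<lambda>p. 1 - snd p)(0::real,t 0)))) (\<lambda>t. \<alpha>(t(0:=(\<lambda>p. 1 - snd p)(1::real,t 0))))"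
  proof (rule reparam[OF a])
    show "continuous_on ({0..1}\<times>{0..1}) (\<lambda>p::real\<times>real. 1 - snd p)"
      by (intro continuous_intros)
  qed auto
  then show ?thesis using rel_Omega by (simp add: rvc_def)
qed

lemma const_Omega: "(\<lambda>t. x0) \<in> \<Omega>"
  using x0X by (auto simp: Omega_def)

lemma assoc_rel:
  assumes "\<alpha> \<in> \<Omega>" "\<beta> \<in> \<Omega>" "\<gamma> \<in> \<Omega>"
  shows "rel_homotopic n X x0 (concat_cube \<alpha> (concat_cube \<beta> \<gamma>)) (concat_cube (concat_cube \<alpha> \<beta>) \<gamma>)"
proof -
  define ph where "ph = (\<lambda>s::real. min (2 * s) (min (s + 1/4) (s/2 + 1/2)))"
  have h1: "rel_homotopic n X x0 (concat_cube \<alpha> (concat_cube \<beta> \<gamma>))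
          (\<lambda>t. (concat_cube \<alpha> (concat_cube \<beta> \<gamma>)) (t(0 := ph (t 0))))"
    by (rule rp1) (auto simp: ph_def assms concat_Omega intro!: continuous_intros)
  have h2: "(concat_cube \<alpha> (concat_cube \<beta> \<gamma>)) (t(0 := ph (t 0))) = concat_cube (concat_cube \<alpha> \<beta>) \<gamma> t" for t
  proof -
    consider "t 0 \<le> 1/4" | "1/4 < t 0" "t 0 \<le> 1/2" | "1/2 < t 0" by linarith
    then show ?thesis
    proof cases
      case 1
      then have "ph (t 0) = 2 * t 0" by (simp add: ph_def)
      with 1 show ?thesis by (simp add: concat_cube_def)
    next
      case 2
      then have "ph (t 0) = t 0 + 1/4" by (simp add: ph_def)
      with 2 show ?thesis by (simp add: concat_cube_def algebra_simps)
    next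
      case 3
      then have "ph (t 0) = t 0 / 2 + 1/2" by (simp add: ph_def)
      with 3 show ?thesis by (simp add: concat_cube_def algebra_simps)
    qed
  qed
  show ?thesis by (rule rel_eq[OF h1]) (simp_all add: h2)
qed

lemma lone_rel:
  assumes a: "\<alpha> \<in> \<Omega>"
  shows "rel_homotopic n X x0 \<alpha> (concat_cube (\<lambda>t. x0) \<alpha>)"
proof -
  define ph where "ph = (\<lambda>s::real. max 0 (2 * s - 1))"
  have h1: "rel_homotopic n X x0 \<alpha> (\<lambda>t. \<alpha> (t(0 := ph (t 0))))"
    by (rule rp1) (auto simp: ph_def a intro!: continuous_intros)
  have h2: "\<alpha> (t(0 := ph (t 0))) = concat_cube (\<lambda>t. x0) \<alpha> t" if t: "t \<in> C" for t
  proof (cases "t 0 \<le> 1/2")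
    case True
    then have "ph (t 0) = 0" by (simp add: ph_def)
    moreover have "t(0:=0) \<in> B" using bd_upd01 t by auto
    ultimately show ?thesis using True a by (simp add: concat_cube_def Omega_def)
  next
    case False
    then have "ph (t 0) = 2 * t 0 - 1" by (simp add: ph_def)
    then show ?thesis using False by (simp add: concat_cube_def)
  qed
  show ?thesis by (rule rel_eq[OF h1]) (simp_all add: h2)
qed

lemma linv_rel:
  assumes a: "\<alpha> \<in> \<Omega>"
  shows "rel_homotopic n X x0 (concat_cube (rvc \<alpha>) \<alpha>) (\<lambda>t. x0)"
proof -
  define \<Phi> where "\<Phi> = (\<lambda>p::real \<times> real. (1 - fst p) * \<bar>2 * snd p - 1\<bar> + fst p)"
  have P01: "0 \<le> \<Phi>(u,s) \<and> \<Phi>(u,s) \<le> 1" if "0 \<le> u" "u \<le> 1" "0 \<le> s" "s \<le> 1" for u s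
  proof -
    have "\<bar>2 * s - 1\<bar> \<le> 1" using that by auto
    then have "(1 - u) * \<bar>2 * s - 1\<bar> \<le> (1 - u) * 1" using that by (intro mult_left_mono) auto
    then show ?thesis using that by (simp add: \<Phi>_def)
  qed
  have "rel_homotopic n X x0 (\<lambda>t. \<alpha>(t(0:=\<Phi>(0,t 0)))) (\<lambda>t. \<alpha>(t(0:=\<Phi>(1,t 0))))"
    by (rule reparam[where \<Phi>=\<Phi>, OF a _ P01]) (auto simp: \<Phi>_def intro!: continuous_intros)
  then show ?thesis
  proof (rule rel_eq)
    fix t assume t: "t \<in> C"
    show "concat_cube (rvc \<alpha>) \<alpha> t = \<alpha> (t(0 := \<Phi> (0, t 0)))"
      by (simp add: concat_cube_def rvc_def \<Phi>_def)
    have "t(0:=1) \<in> B" using bd_upd01 t by auto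
    then show "x0 = \<alpha> (t(0 := \<Phi> (1, t 0)))" using a by (simp add: \<Phi>_def Omega_def)
  qed
qed

abbreviation "G \<equiv> pi_group n X x0"
abbreviation cls where "cls \<alpha> \<equiv> R `` {\<alpha>}"

lemma carrier_G: "carrier G = \<Omega> // R" by (simp add: pi_group_def)
lemma one_G: "\<one>\<^bsub>G\<^esub> = cls (\<lambda>t. x0)" by (simp add: pi_group_def)
lemma mult_G: "a \<otimes>\<^bsub>G\<^esub> b = cls (concat_cube (SOME \<alpha>. \<alpha> \<in> a) (SOME \<beta>. \<beta> \<in> b))"
  by (simp add: pi_group_def)

lemma cls_mem: "\<alpha> \<in> \<Omega> \<Longrightarrow> cls \<alpha> \<in> carrier G"
  by (simp add: carrier_G quotientI)

lemma self_cls: "\<alpha> \<in> \<Omega> \<Longrightarrow> \<alpha> \<in> cls \<alpha>"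
  using equiv_class_self[OF equivR] by blast

lemma cls_eqI: "rel_homotopic n X x0 \<alpha> \<beta> \<Longrightarrow> cls \<alpha> = cls \<beta>"
  using rel_Omega[of \<alpha> \<beta>] equiv_class_eq[OF equivR, of \<alpha> \<beta>] by (simp add: homotopy_rel_def)

lemma carrierE: "a \<in> carrier G \<Longrightarrow> (\<And>\<alpha>. \<alpha> \<in> \<Omega> \<Longrightarrow> a = cls \<alpha> \<Longrightarrow> P) \<Longrightarrow> P"
  by (auto simp: carrier_G elim: quotientE)

lemma cls_of_mem: "a \<in> carrier G \<Longrightarrow> \<alpha> \<in> a \<Longrightarrow> \<alpha> \<in> \<Omega> \<and> a = cls \<alpha>"
proof -
  assume a: "a \<in> carrier G" "\<alpha> \<in> a"
  from a(1) obtain \<gamma> where g: "\<gamma> \<in> \<Omega>" "a = cls \<gamma>" by (rule carrierE)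
  with a have r: "(\<gamma>, \<alpha>) \<in> R" by simp
  then have "\<alpha> \<in> \<Omega>" by (simp add: homotopy_rel_def)
  with r g show ?thesis using equiv_class_eq[OF equivR r] by simp
qed

lemma R_iff: "(\<alpha>, \<beta>) \<in> R \<longleftrightarrow> \<alpha> \<in> \<Omega> \<and> \<beta> \<in> \<Omega> \<and> rel_homotopic n X x0 \<alpha> \<beta>"
  by (simp add: homotopy_rel_def)

lemma mult_cls: "\<alpha> \<in> \<Omega> \<Longrightarrow> \<beta> \<in> \<Omega> \<Longrightarrow> cls \<alpha> \<otimes>\<^bsub>G\<^esub> cls \<beta> = cls (concat_cube \<alpha> \<beta>)"
proof -
  assume a: "\<alpha> \<in> \<Omega>" and b: "\<beta> \<in> \<Omega>"
  let ?a = "SOME \<alpha>'. \<alpha>' \<in> cls \<alpha>" and ?b = "SOME \<beta>'. \<beta>' \<in> cls \<beta>"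
  have "?a \<in> cls \<alpha>" by (rule someI[where P="\<lambda>x. x \<in> cls \<alpha>", OF self_cls[OF a]])
  then have ra: "rel_homotopic n X x0 \<alpha> ?a" unfolding Image_singleton_iff R_iff by blast
  have "?b \<in> cls \<beta>" by (rule someI[where P="\<lambda>x. x \<in> cls \<beta>", OF self_cls[OF b]])
  then have rb: "rel_homotopic n X x0 \<beta> ?b" unfolding Image_singleton_iff R_iff by blast
  show ?thesis unfolding mult_G using cls_eqI[OF concat_rel[OF ra rb]] by simp
qed

lemma group_G: "group G"
proof (rule groupI)
  fix a b assume "a \<in> carrier G" "b \<in> carrier G"
  then show "a \<otimes>\<^bsub>G\<^esub> b \<in> carrier G"
    by (metis carrierE mult_cls concat_Omega cls_mem)
next
  show "\<one>\<^bsub>G\<^esub> \<in> carrier G" by (simp add: one_G cls_mem const_Omega)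
next
  fix a b c assume "a \<in> carrier G" "b \<in> carrier G" "c \<in> carrier G"
  then obtain \<alpha> \<beta> \<gamma> where abc: "\<alpha> \<in> \<Omega>" "\<beta> \<in> \<Omega>" "\<gamma> \<in> \<Omega>" "a = cls \<alpha>" "b = cls \<beta>" "c = cls \<gamma>"
    by (metis carrierE)
  show "a \<otimes>\<^bsub>G\<^esub> b \<otimes>\<^bsub>G\<^esub> c = a \<otimes>\<^bsub>G\<^esub> (b \<otimes>\<^bsub>G\<^esub> c)"
    using abc by (simp add: mult_cls concat_Omega cls_eqI[OF assoc_rel])
next
  fix a assume "a \<in> carrier G"
  then obtain \<alpha> where a: "\<alpha> \<in> \<Omega>" "a = cls \<alpha>" by (metis carrierE)
  show "\<one>\<^bsub>G\<^esub> \<otimes>\<^bsub>G\<^esub> a = a"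
  proof -
    have "cls (concat_cube (\<lambda>t. x0) \<alpha>) = cls \<alpha>" using cls_eqI[OF lone_rel[OF a(1)]] by simp
    then show ?thesis using a by (simp add: one_G mult_cls const_Omega)
  qed
  have "cls (rvc \<alpha>) \<otimes>\<^bsub>G\<^esub> a = \<one>\<^bsub>G\<^esub>"
    using a by (simp add: one_G mult_cls rvc_Omega cls_eqI[OF linv_rel])
  then show "\<exists>y\<in>carrier G. y \<otimes>\<^bsub>G\<^esub> a = \<one>\<^bsub>G\<^esub>"
    using a rvc_Omega cls_mem by blast
qed

lemma inv_cls: "\<alpha> \<in> \<Omega> \<Longrightarrow> inv\<^bsub>G\<^esub> (cls \<alpha>) = cls (rvc \<alpha>)"
  by (rule group.inv_equality[OF group_G])
    (simp_all add: one_G mult_cls rvc_Omega cls_eqI[OF linv_rel] cls_mem)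

lemma compact_C: "compact C"
proof -
  have e: "C = PiE UNIV (\<lambda>i::nat. if i < n then {0..1::real} else {0})"
    unfolding cube_def PiE_UNIV_domain Pi_iff by (auto split: if_splits)
  have "compactin (product_topology (\<lambda>i. euclidean) UNIV) (PiE UNIV (\<lambda>i::nat. if i < n then {0..1::real} else {0}))"
    unfolding compactin_PiE by auto
  then show ?thesis unfolding e euclidean_product_topology compactin_euclidean_iff .
qed

lemma mu_bdd: "\<alpha> \<in> \<Omega> \<Longrightarrow> \<beta> \<in> \<Omega> \<Longrightarrow> bdd_above ((\<lambda>t. dist (\<alpha> t) (\<beta> t)) ` C)"
  apply (rule bounded_imp_bdd_above)
  apply (rule compact_imp_bounded)
  apply (rule compact_continuous_image[OF _ compact_C])
  apply (intro continuous_intros)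
  apply (auto simp: Omega_def)
  done

lemma mu_ge: "\<alpha> \<in> \<Omega> \<Longrightarrow> \<beta> \<in> \<Omega> \<Longrightarrow> t \<in> C \<Longrightarrow> dist (\<alpha> t) (\<beta> t) \<le> mu n \<alpha> \<beta>"
  unfolding mu_def by (rule cSUP_upper[OF _ mu_bdd])

lemma mu_le: "(\<And>t. t \<in> C \<Longrightarrow> dist (\<alpha> t) (\<beta> t) \<le> M) \<Longrightarrow> mu n \<alpha> \<beta> \<le> M"
  unfolding mu_def by (rule cSUP_least[OF C_ne])

lemma mu_nonneg: "\<alpha> \<in> \<Omega> \<Longrightarrow> \<beta> \<in> \<Omega> \<Longrightarrow> 0 \<le> mu n \<alpha> \<beta>"
proof -
  assume ab: "\<alpha> \<in> \<Omega>" "\<beta> \<in> \<Omega>"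
  obtain t where "t \<in> C" using C_ne by blast
  then have "dist (\<alpha> t) (\<beta> t) \<le> mu n \<alpha> \<beta>" by (rule mu_ge[OF ab])
  then show ?thesis using zero_le_dist[of "\<alpha> t" "\<beta> t"] by linarith
qed

lemma mu_concat:
  assumes "\<alpha> \<in> \<Omega>" "\<alpha>' \<in> \<Omega>" "\<beta> \<in> \<Omega>" "\<beta>' \<in> \<Omega>" "mu n \<alpha> \<alpha>' < r" "mu n \<beta> \<beta>' < r"
  shows "mu n (concat_cube \<alpha> \<beta>) (concat_cube \<alpha>' \<beta>') < r"
proof -
  have "mu n (concat_cube \<alpha> \<beta>) (concat_cube \<alpha>' \<beta>') \<le> max (mu n \<alpha> \<alpha>') (mu n \<beta> \<beta>')"
  proof (rule mu_le)
    fix t assume t: "t \<in> C"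
    then have t0: "0 \<le> t 0" "t 0 \<le> 1" using n1 by (auto simp: cube_def)
    show "dist (concat_cube \<alpha> \<beta> t) (concat_cube \<alpha>' \<beta>' t) \<le> max (mu n \<alpha> \<alpha>') (mu n \<beta> \<beta>')"
    proof (cases "t 0 \<le> 1/2")
      case True
      then have "t(0 := 2 * t 0) \<in> C" using cube_upd t t0 by auto
      then have "dist (\<alpha> (t(0 := 2 * t 0))) (\<alpha>' (t(0 := 2 * t 0))) \<le> mu n \<alpha> \<alpha>'"
        by (rule mu_ge[OF assms(1,2)])
      then show ?thesis using True unfolding concat_cube_def by simp
    next
      case False
      then have "t(0 := 2 * t 0 - 1) \<in> C" using cube_upd t t0 by auto
      then have "dist (\<beta> (t(0 := 2 * t 0 - 1))) (\<beta>' (t(0 := 2 * t 0 - 1))) \<le> mu n \<beta> \<beta>'"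
        by (rule mu_ge[OF assms(3,4)])
      then show ?thesis using False unfolding concat_cube_def by simp
    qed
  qed
  then show ?thesis using assms(5,6) by linarith
qed

lemma mu_rvc:
  assumes "\<alpha> \<in> \<Omega>" "\<beta> \<in> \<Omega>"
  shows "mu n (rvc \<alpha>) (rvc \<beta>) \<le> mu n \<alpha> \<beta>"
proof (rule mu_le)
  fix t assume t: "t \<in> C"
  then have t0: "0 \<le> t 0" "t 0 \<le> 1" using n1 by (auto simp: cube_def)
  then have "t(0 := 1 - t 0) \<in> C" using cube_upd t by auto
  then show "dist (rvc \<alpha> t) (rvc \<beta> t) \<le> mu n \<alpha> \<beta>"
    using mu_ge[OF assms] by (simp add: rvc_def)
qed

lemma mu_refl: "mu n \<alpha> \<alpha> = 0"
proof -
  have "mu n \<alpha> \<alpha> = (SUP t\<in>C. (0::real))" unfolding mu_def by simp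
  then show ?thesis using C_ne by simp
qed

lemma mu_sym: "mu n \<alpha> \<beta> = mu n \<beta> \<alpha>"
  unfolding mu_def by (simp add: dist_commute)

lemma cls_sub: "a \<in> carrier G \<Longrightarrow> a \<subseteq> \<Omega>"
  using cls_of_mem by blast

lemma rho_lt:
  assumes a: "a \<in> carrier G" and b: "b \<in> carrier G"
  shows "rho n a b < r \<longleftrightarrow> (\<exists>\<alpha>\<in>a. \<exists>\<beta>\<in>b. mu n \<alpha> \<beta> < r)"
proof -
  let ?S = "{mu n \<alpha> \<beta> | \<alpha> \<beta>. \<alpha> \<in> a \<and> \<beta> \<in> b}"
  from a obtain \<alpha> where "\<alpha> \<in> \<Omega>" "a = cls \<alpha>" by (rule carrierE)
  then have "\<alpha> \<in> a" using self_cls by simp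
  moreover from b obtain \<beta> where "\<beta> \<in> \<Omega>" "b = cls \<beta>" by (rule carrierE)
  then have "\<beta> \<in> b" using self_cls by simp
  ultimately have ne: "?S \<noteq> {}" by blast
  have bd: "bdd_below ?S"
    using cls_sub[OF a] cls_sub[OF b] mu_nonneg by (auto intro!: bdd_belowI[of _ 0])
  have "rho n a b < r \<longleftrightarrow> (\<exists>x\<in>?S. x < r)" unfolding rho_def by (rule cInf_less_iff[OF ne bd])
  also have "\<dots> \<longleftrightarrow> (\<exists>\<alpha>\<in>a. \<exists>\<beta>\<in>b. mu n \<alpha> \<beta> < r)" by auto
  finally show ?thesis .
qed

lemma mclosed: "a \<in> carrier G \<Longrightarrow> b \<in> carrier G \<Longrightarrow> a \<otimes>\<^bsub>G\<^esub> b \<in> carrier G"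
  by (rule monoid.m_closed[OF group.is_monoid[OF group_G]])

lemma iclosed: "a \<in> carrier G \<Longrightarrow> inv\<^bsub>G\<^esub> a \<in> carrier G"
  by (rule group.inv_closed[OF group_G])

lemma rho_mult:
  assumes c: "a \<in> carrier G" "a' \<in> carrier G" "b \<in> carrier G" "b' \<in> carrier G"
    and r: "rho n a a' < r" "rho n b b' < r"
  shows "rho n (a \<otimes>\<^bsub>G\<^esub> b) (a' \<otimes>\<^bsub>G\<^esub> b') < r"
proof -
  obtain \<alpha> \<alpha>' where A: "\<alpha> \<in> a" "\<alpha>' \<in> a'" "mu n \<alpha> \<alpha>' < r" using r(1) rho_lt[OF c(1,2)] by blast
  obtain \<beta> \<beta>' where B: "\<beta> \<in> b" "\<beta>' \<in> b'" "mu n \<beta> \<beta>' < r" using r(2) rho_lt[OF c(3,4)] by blast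
  have o: "\<alpha> \<in> \<Omega>" "a = cls \<alpha>" "\<alpha>' \<in> \<Omega>" "a' = cls \<alpha>'" "\<beta> \<in> \<Omega>" "b = cls \<beta>" "\<beta>' \<in> \<Omega>" "b' = cls \<beta>'"
    using cls_of_mem c A B by blast+
  have m: "a \<otimes>\<^bsub>G\<^esub> b = cls (concat_cube \<alpha> \<beta>)" "a' \<otimes>\<^bsub>G\<^esub> b' = cls (concat_cube \<alpha>' \<beta>')"
    using o mult_cls by auto
  have m1: "concat_cube \<alpha> \<beta> \<in> a \<otimes>\<^bsub>G\<^esub> b" "concat_cube \<alpha>' \<beta>' \<in> a' \<otimes>\<^bsub>G\<^esub> b'"
    unfolding m using o concat_Omega self_cls by auto
  have m2: "mu n (concat_cube \<alpha> \<beta>) (concat_cube \<alpha>' \<beta>') < r"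
    using mu_concat o A B by auto
  show ?thesis unfolding rho_lt[OF mclosed[OF c(1,3)] mclosed[OF c(2,4)]]
    using m1 m2 by blast
qed

lemma rho_inv:
  assumes c: "a \<in> carrier G" "b \<in> carrier G" and r: "rho n a b < r"
  shows "rho n (inv\<^bsub>G\<^esub> a) (inv\<^bsub>G\<^esub> b) < r"
proof -
  obtain \<alpha> \<beta> where A: "\<alpha> \<in> a" "\<beta> \<in> b" "mu n \<alpha> \<beta> < r" using r rho_lt[OF c] by blast
  have o: "\<alpha> \<in> \<Omega>" "a = cls \<alpha>" "\<beta> \<in> \<Omega>" "b = cls \<beta>"
    using cls_of_mem c A by blast+
  have i: "inv\<^bsub>G\<^esub> a = cls (rvc \<alpha>)" "inv\<^bsub>G\<^esub> b = cls (rvc \<beta>)" using o inv_cls by auto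
  have m1: "rvc \<alpha> \<in> inv\<^bsub>G\<^esub> a" "rvc \<beta> \<in> inv\<^bsub>G\<^esub> b"
    unfolding i using o rvc_Omega self_cls by auto
  have m2: "mu n (rvc \<alpha>) (rvc \<beta>) < r" using mu_rvc[of \<alpha> \<beta>] o A by linarith
  show ?thesis unfolding rho_lt[OF iclosed[OF c(1)] iclosed[OF c(2)]]
    using m1 m2 by blast
qed

lemma rho_refl: "a \<in> carrier G \<Longrightarrow> 0 < r \<Longrightarrow> rho n a a < r"
proof -
  assume a: "a \<in> carrier G" and r: "0 < r"
  from a obtain \<alpha> where "\<alpha> \<in> \<Omega>" "a = cls \<alpha>" by (rule carrierE)
  then have "\<alpha> \<in> a" using self_cls by simp
  then show ?thesis unfolding rho_lt[OF a a] using mu_refl[of \<alpha>] r by (intro bexI[of _ \<alpha>]) auto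
qed

lemma rho_sym: "a \<in> carrier G \<Longrightarrow> b \<in> carrier G \<Longrightarrow> rho n a b < r \<Longrightarrow> rho n b a < r"
  unfolding rho_lt by (metis mu_sym)

lemma rho_ultra:
  assumes c: "a \<in> carrier G" "b \<in> carrier G" "c \<in> carrier G"
    and r: "rho n a b < r" "rho n b c < r"
  shows "rho n a c < r"
proof -
  obtain \<alpha> \<beta> where A: "\<alpha> \<in> a" "\<beta> \<in> b" "mu n \<alpha> \<beta> < r" using r(1) rho_lt[OF c(1,2)] by blast
  have "\<alpha> \<in> \<Omega>" "\<beta> \<in> \<Omega>" using A cls_sub c by auto
  then have r0: "0 < r" using mu_nonneg[of \<alpha> \<beta>] A by linarith
  have ib: "inv\<^bsub>G\<^esub> b \<in> carrier G" using iclosed c by auto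
  have e1: "a \<otimes>\<^bsub>G\<^esub> (inv\<^bsub>G\<^esub> b \<otimes>\<^bsub>G\<^esub> b) = a"
    using c by (simp add: group.l_inv[OF group_G] monoid.r_one[OF group.is_monoid[OF group_G]])
  have e2: "b \<otimes>\<^bsub>G\<^esub> (inv\<^bsub>G\<^esub> b \<otimes>\<^bsub>G\<^esub> c) = c"
    using c ib by (simp add: group.r_inv[OF group_G] monoid.l_one[OF group.is_monoid[OF group_G]]
        monoid.m_assoc[OF group.is_monoid[OF group_G], symmetric])
  have "rho n (inv\<^bsub>G\<^esub> b \<otimes>\<^bsub>G\<^esub> b) (inv\<^bsub>G\<^esub> b \<otimes>\<^bsub>G\<^esub> c) < r"
    by (rule rho_mult[OF ib ib c(2,3) rho_refl[OF ib r0] r(2)])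
  then have "rho n (a \<otimes>\<^bsub>G\<^esub> (inv\<^bsub>G\<^esub> b \<otimes>\<^bsub>G\<^esub> b)) (b \<otimes>\<^bsub>G\<^esub> (inv\<^bsub>G\<^esub> b \<otimes>\<^bsub>G\<^esub> c)) < r"
    by (rule rho_mult[OF c(1,2) mclosed[OF ib c(2)] mclosed[OF ib c(3)] r(1)])
  then show ?thesis using e1 e2 by simp
qed

lemma rho_pos: "a \<in> carrier G \<Longrightarrow> b \<in> carrier G \<Longrightarrow> rho n a b < r \<Longrightarrow> 0 < r"
proof -
  assume c: "a \<in> carrier G" "b \<in> carrier G" and r: "rho n a b < r"
  obtain \<alpha> \<beta> where A: "\<alpha> \<in> a" "\<beta> \<in> b" "mu n \<alpha> \<beta> < r" using r rho_lt[OF c(1,2)] by blast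
  have "\<alpha> \<in> \<Omega>" "\<beta> \<in> \<Omega>" using A cls_sub c by auto
  then show "0 < r" using mu_nonneg[of \<alpha> \<beta>] A by linarith
qed

abbreviation "T \<equiv> pi_topology n X x0"

lemma openT: "openin T U \<longleftrightarrow> U \<subseteq> carrier G \<and> (\<forall>a\<in>U. \<exists>r>0. {b \<in> carrier G. rho n a b < r} \<subseteq> U)"
  unfolding pi_topology_def by (rule openin_pm)

lemma topT: "topspace T = carrier G"
  unfolding pi_topology_def by (rule topspace_pm)

lemma ball_open: "a \<in> carrier G \<Longrightarrow> openin T {b \<in> carrier G. rho n a b < r}"
  unfolding openT
proof (intro conjI ballI)
  assume a: "a \<in> carrier G"
  show "{b \<in> carrier G. rho n a b < r} \<subseteq> carrier G" by blast
  fix b assume b: "b \<in> {b \<in> carrier G. rho n a b < r}"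
  then have r0: "0 < r" using rho_pos a by blast
  have "{c \<in> carrier G. rho n b c < r} \<subseteq> {b \<in> carrier G. rho n a b < r}"
    using rho_ultra[OF a] b by blast
  then show "\<exists>r'>0. {c \<in> carrier G. rho n b c < r'} \<subseteq> {b \<in> carrier G. rho n a b < r}"
    using r0 by blast
qed

lemma cont_mult: "continuous_map (prod_topology T T) T (\<lambda>(a, b). a \<otimes>\<^bsub>G\<^esub> b)"
  unfolding continuous_map_def topspace_prod_topology topT
proof (intro conjI allI impI)
  show "(\<lambda>(a, b). a \<otimes>\<^bsub>G\<^esub> b) \<in> carrier G \<times> carrier G \<rightarrow> carrier G"
    using mclosed by auto
  fix U assume U: "openin T U"
  show "openin (prod_topology T T) {x \<in> carrier G \<times> carrier G. (case x of (a, b) \<Rightarrow> a \<otimes>\<^bsub>G\<^esub> b) \<in> U}"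
    unfolding openin_prod_topology_alt
  proof (intro allI impI)
    fix a b assume ab: "(a, b) \<in> {x \<in> carrier G \<times> carrier G. (case x of (a, b) \<Rightarrow> a \<otimes>\<^bsub>G\<^esub> b) \<in> U}"
    then have a: "a \<in> carrier G" and b: "b \<in> carrier G" and abU: "a \<otimes>\<^bsub>G\<^esub> b \<in> U" by auto
    obtain r where r: "r > 0" "{c \<in> carrier G. rho n (a \<otimes>\<^bsub>G\<^esub> b) c < r} \<subseteq> U"
      using U abU unfolding openT by blast
    let ?U = "{c \<in> carrier G. rho n a c < r}" and ?V = "{c \<in> carrier G. rho n b c < r}"
    have "openin T ?U" "openin T ?V" using ball_open a b by auto
    moreover have "a \<in> ?U" "b \<in> ?V" using rho_refl a b r by auto
    moreover have "?U \<times> ?V \<subseteq> {x \<in> carrier G \<times> carrier G. (case x of (a, b) \<Rightarrow> a \<otimes>\<^bsub>G\<^esub> b) \<in> U}"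
    proof
      fix x assume "x \<in> ?U \<times> ?V"
      then obtain a' b' where x: "x = (a', b')" "a' \<in> carrier G" "b' \<in> carrier G"
        "rho n a a' < r" "rho n b b' < r" by blast
      then have "rho n (a \<otimes>\<^bsub>G\<^esub> b) (a' \<otimes>\<^bsub>G\<^esub> b') < r"
        using rho_mult[OF a x(2) b x(3)] by blast
      then have "a' \<otimes>\<^bsub>G\<^esub> b' \<in> U" using r(2) mclosed[OF x(2,3)] by blast
      then show "x \<in> {x \<in> carrier G \<times> carrier G. (case x of (a, b) \<Rightarrow> a \<otimes>\<^bsub>G\<^esub> b) \<in> U}"
        using x by simp
    qed
    ultimately show "\<exists>U' V'. openin T U' \<and> openin T V' \<and> a \<in> U' \<and> b \<in> V' \<and> U' \<times> V' \<subseteq>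
        {x \<in> carrier G \<times> carrier G. (case x of (a, b) \<Rightarrow> a \<otimes>\<^bsub>G\<^esub> b) \<in> U}"
      by blast
  qed
qed

lemma cont_inv: "continuous_map T T (\<lambda>a. inv\<^bsub>G\<^esub> a)"
  unfolding continuous_map_def topT
proof (intro conjI allI impI)
  show "(\<lambda>a. inv\<^bsub>G\<^esub> a) \<in> carrier G \<rightarrow> carrier G" using iclosed by auto
  fix U assume U: "openin T U"
  show "openin T {x \<in> carrier G. inv\<^bsub>G\<^esub> x \<in> U}"
    unfolding openT
  proof (intro conjI ballI)
    show "{x \<in> carrier G. inv\<^bsub>G\<^esub> x \<in> U} \<subseteq> carrier G" by blast
    fix a assume "a \<in> {x \<in> carrier G. inv\<^bsub>G\<^esub> x \<in> U}"
    then have a: "a \<in> carrier G" and aU: "inv\<^bsub>G\<^esub> a \<in> U" by auto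
    obtain r where r: "r > 0" "{c \<in> carrier G. rho n (inv\<^bsub>G\<^esub> a) c < r} \<subseteq> U"
      using U aU unfolding openT by blast
    have "{c \<in> carrier G. rho n a c < r} \<subseteq> {x \<in> carrier G. inv\<^bsub>G\<^esub> x \<in> U}"
    proof
      fix c assume c: "c \<in> {c \<in> carrier G. rho n a c < r}"
      then have "rho n (inv\<^bsub>G\<^esub> a) (inv\<^bsub>G\<^esub> c) < r" using rho_inv a by blast
      then show "c \<in> {x \<in> carrier G. inv\<^bsub>G\<^esub> x \<in> U}" using r(2) iclosed c by blast
    qed
    then show "\<exists>r>0. {b \<in> carrier G. rho n a b < r} \<subseteq> {x \<in> carrier G. inv\<^bsub>G\<^esub> x \<in> U}"
      using r(1) by blast
  qed
qed

lemma normal_ball: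
  assumes r: "0 < r"
  shows "{a \<in> carrier G. rho n \<one>\<^bsub>G\<^esub> a < r} \<lhd> G"
proof -
  let ?N = "{a \<in> carrier G. rho n \<one>\<^bsub>G\<^esub> a < r}"
  have gr: "group G" by (rule group_G)
  have one: "\<one>\<^bsub>G\<^esub> \<in> carrier G" by (rule monoid.one_closed[OF group.is_monoid[OF gr]])
  have sub: "subgroup ?N G"
  proof (rule group.subgroupI[OF gr])
    show "?N \<subseteq> carrier G" by blast
    show "?N \<noteq> {}" using one rho_refl[OF one r] by blast
    fix a assume a: "a \<in> ?N"
    then have "rho n (inv\<^bsub>G\<^esub> \<one>\<^bsub>G\<^esub>) (inv\<^bsub>G\<^esub> a) < r" using rho_inv one by blast
    then show "inv\<^bsub>G\<^esub> a \<in> ?N" using a iclosed monoid.inv_one[OF group.is_monoid[OF gr]] by auto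
  next
    fix a b assume a: "a \<in> ?N" and b: "b \<in> ?N"
    then have "rho n (\<one>\<^bsub>G\<^esub> \<otimes>\<^bsub>G\<^esub> \<one>\<^bsub>G\<^esub>) (a \<otimes>\<^bsub>G\<^esub> b) < r"
      using rho_mult one by blast
    then show "a \<otimes>\<^bsub>G\<^esub> b \<in> ?N" using a b mclosed monoid.l_one[OF group.is_monoid[OF gr] one] by auto
  qed
  show ?thesis unfolding group.normal_inv_iff[OF gr]
  proof (intro conjI sub ballI)
    fix x h assume x: "x \<in> carrier G" and h: "h \<in> ?N"
    have ix: "inv\<^bsub>G\<^esub> x \<in> carrier G" using iclosed x by blast
    have "rho n (x \<otimes>\<^bsub>G\<^esub> \<one>\<^bsub>G\<^esub>) (x \<otimes>\<^bsub>G\<^esub> h) < r"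
      using rho_mult[OF x x one] rho_refl[OF x r] h by blast
    then have "rho n (x \<otimes>\<^bsub>G\<^esub> \<one>\<^bsub>G\<^esub> \<otimes>\<^bsub>G\<^esub> inv\<^bsub>G\<^esub> x) (x \<otimes>\<^bsub>G\<^esub> h \<otimes>\<^bsub>G\<^esub> inv\<^bsub>G\<^esub> x) < r"
      using rho_mult[OF mclosed[OF x one] _ ix ix] mclosed[OF x] h rho_refl[OF ix r] by blast
    moreover have "x \<otimes>\<^bsub>G\<^esub> \<one>\<^bsub>G\<^esub> \<otimes>\<^bsub>G\<^esub> inv\<^bsub>G\<^esub> x = \<one>\<^bsub>G\<^esub>"
      using x by (simp add: group.r_inv[OF gr] monoid.r_one[OF group.is_monoid[OF gr]])
    ultimately show "x \<otimes>\<^bsub>G\<^esub> h \<otimes>\<^bsub>G\<^esub> inv\<^bsub>G\<^esub> x \<in> ?N"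
      using mclosed[OF mclosed[OF x] ix] h by auto
  qed
qed

lemma main:
  "topological_group G T \<and>
    (\<forall>r>0. openin T {a \<in> carrier G. rho n (one G) a < r} \<and>
            {a \<in> carrier G. rho n (one G) a < r} \<lhd> G)"
proof (intro conjI allI impI)
  show "topological_group G T"
    unfolding topological_group_def using group_G topT cont_mult cont_inv by blast
  fix r :: real assume r: "0 < r"
  have one: "\<one>\<^bsub>G\<^esub> \<in> carrier G" by (rule monoid.one_closed[OF group.is_monoid[OF group_G]])
  show "openin T {a \<in> carrier G. rho n (one G) a < r}" using ball_open[OF one] by simp
  show "{a \<in> carrier G. rho n (one G) a < r} \<lhd> G" using normal_ball[OF r] by simp
qed

end

theorem proposition4p6:
  fixes X :: "'a::metric_space set" and x0 :: 'a and n :: nat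
  assumes "x0 \<in> X" and "n \<ge> 1"
  shows "topological_group (pi_group n X x0) (pi_topology n X x0) \<and>
    (\<forall>r>0. openin (pi_topology n X x0)
              {a \<in> carrier (pi_group n X x0). rho n (one (pi_group n X x0)) a < r} \<and>
            {a \<in> carrier (pi_group n X x0). rho n (one (pi_group n X x0)) a < r}
              \<lhd> pi_group n X x0)"
proof -
  interpret pig X x0 n using assms by unfold_locales
  show ?thesis by (rule main)
qed

end
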